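(* For a finite set $T$ of prototiles of the binary Wang tiling problem, the following are equivalent: (i) $T$ tiles the square binary tiling; (ii) $T$ tiles every binary tiling of the half-plane; (iii) $T$ tiles every finite union of tiles of the square binary tiling and of every binary tiling of the half-plane.
   Context: The square binary tiling is the recursive self-similar subdivision of a square into $2\times1$ rectangles: one rectangle covers the upper half of the square, and the lower left and lower right quadrants are each subdivided by the same pattern recursively. Each tile's bottom side is the union of the top sides of its two children, and it shares its full left and right sides with same-sized neighbors. A binary tiling of the half-plane $\{y>0\}$ is a tiling by axis-parallel $2\times1$ rectangles with the same local structure: for some $c>0$ and each integer $k$, the tiles in the strip $c2^{k-1}\le y\le c2^{k}$ are the rectangles $[a_k+jc2^{k},a_k+(j+1)c2^{k}]\times[c2^{k-1},c2^{k}]$, $j\in\mathbb{Z}$, with offsets chosen so that each tile's bottom side is the union of the top sides of two tiles of the next lower strip (in the Poincaré half-plane model, these tiles are congruent). A prototile is a $2\times 1$ rectangle whose five edges (top, left, right, and the two halves of the bottom side) are colored. $T$ tiles a set of tiles if one can assign to each tile the coloring of some prototile in $T$ so that any two tiles sharing an edge give that edge the same color. *)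

theory Defs
  imports Complex_Main
begin

text \<open>A prototile: a 2x1 rectangle with five coloured edges
  (top, left, right, left half of the bottom, right half of the bottom).\<close>
datatype 'c prototile =
  Proto (top_col: 'c) (left_col: 'c) (right_col: 'c) (botL_col: 'c) (botR_col: 'c)

text \<open>A set S of tiles with its edge-sharing structure:
  R x y   : the right side of x is the left side of y;
  CL x y  : the top side of y is the left half of the bottom side of x;
  CR x y  : the top side of y is the right half of the bottom side of x.\<close>
definition tiles_by ::
  "'c prototile set \<Rightarrow> 't set \<Rightarrow> ('t \<Rightarrow> 't \<Rightarrow> bool) \<Rightarrow> ('t \<Rightarrow> 't \<Rightarrow> bool)
     \<Rightarrow> ('t \<Rightarrow> 't \<Rightarrow> bool) \<Rightarrow> bool" where
  "tiles_by T S R CL CR \<longleftrightarrow>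
     (\<exists>f. (\<forall>x\<in>S. f x \<in> T) \<and>
          (\<forall>x\<in>S. \<forall>y\<in>S. R x y \<longrightarrow> right_col (f x) = left_col (f y)) \<and>
          (\<forall>x\<in>S. \<forall>y\<in>S. CL x y \<longrightarrow> botL_col (f x) = top_col (f y)) \<and>
          (\<forall>x\<in>S. \<forall>y\<in>S. CR x y \<longrightarrow> botR_col (f x) = top_col (f y)))"

text \<open>The square binary tiling of the square [0,2]x[0,2]: tile (k,j), k \<ge> 0, j < 2^k,
  is the rectangle [j 2^(1-k), (j+1) 2^(1-k)] x [2^(-k), 2^(1-k)].\<close>
definition sq_tiles :: "(nat \<times> nat) set" where
  "sq_tiles = {(k, j). j < 2 ^ k}"

definition sq_R :: "nat \<times> nat \<Rightarrow> nat \<times> nat \<Rightarrow> bool" where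
  "sq_R x y \<longleftrightarrow> fst y = fst x \<and> snd y = snd x + 1"

definition sq_CL :: "nat \<times> nat \<Rightarrow> nat \<times> nat \<Rightarrow> bool" where
  "sq_CL x y \<longleftrightarrow> fst y = fst x + 1 \<and> snd y = 2 * snd x"

definition sq_CR :: "nat \<times> nat \<Rightarrow> nat \<times> nat \<Rightarrow> bool" where
  "sq_CR x y \<longleftrightarrow> fst y = fst x + 1 \<and> snd y = 2 * snd x + 1"

text \<open>Binary tiling of the half-plane y>0 with parameters c>0 and offsets a k:
  tile (k,j) (k,j :: int) is [a k + j c 2^k, a k + (j+1) c 2^k] x [c 2^(k-1), c 2^k].
  The offsets are such that every tile's bottom side is the union of the top sides
  of two tiles of the next lower strip.\<close>
definition hp_binary :: "real \<Rightarrow> (int \<Rightarrow> real) \<Rightarrow> bool" where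
  "hp_binary c a \<longleftrightarrow> c > 0 \<and>
     (\<forall>k j::int. \<exists>i::int.
        a (k - 1) + of_int i * (c * 2 powi (k - 1)) = a k + of_int j * (c * 2 powi k))"

definition hp_R :: "int \<times> int \<Rightarrow> int \<times> int \<Rightarrow> bool" where
  "hp_R x y \<longleftrightarrow> fst y = fst x \<and> snd y = snd x + 1"

text \<open>Tile (k-1,i) lies below the left half of the bottom of (k,j) iff their left
  endpoints coincide.\<close>
definition hp_CL :: "real \<Rightarrow> (int \<Rightarrow> real) \<Rightarrow> int \<times> int \<Rightarrow> int \<times> int \<Rightarrow> bool" where
  "hp_CL c a x y \<longleftrightarrow> fst y = fst x - 1 \<and>
     a (fst y) + of_int (snd y) * (c * 2 powi (fst y)) = a (fst x) + of_int (snd x) * (c * 2 powi (fst x))"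

definition hp_CR :: "real \<Rightarrow> (int \<Rightarrow> real) \<Rightarrow> int \<times> int \<Rightarrow> int \<times> int \<Rightarrow> bool" where
  "hp_CR c a x y \<longleftrightarrow> fst y = fst x - 1 \<and>
     a (fst y) + of_int (snd y - 1) * (c * 2 powi (fst y)) = a (fst x) + of_int (snd x) * (c * 2 powi (fst x))"

end

theory Submission
  imports Defs "HOL-Library.Countable"
begin

definition tbw :: "'c prototile set \<Rightarrow> 't set \<Rightarrow> ('t \<Rightarrow> 't \<Rightarrow> bool) \<Rightarrow> ('t \<Rightarrow> 't \<Rightarrow> bool)
     \<Rightarrow> ('t \<Rightarrow> 't \<Rightarrow> bool) \<Rightarrow> ('t \<Rightarrow> 'c prototile) \<Rightarrow> bool" where
  "tbw T S R CL CR f \<longleftrightarrow> (\<forall>x\<in>S. f x \<in> T) \<and>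
          (\<forall>x\<in>S. \<forall>y\<in>S. R x y \<longrightarrow> right_col (f x) = left_col (f y)) \<and>
          (\<forall>x\<in>S. \<forall>y\<in>S. CL x y \<longrightarrow> botL_col (f x) = top_col (f y)) \<and>
          (\<forall>x\<in>S. \<forall>y\<in>S. CR x y \<longrightarrow> botR_col (f x) = top_col (f y))"

lemma tiles_by_tbw: "tiles_by T S R CL CR \<longleftrightarrow> (\<exists>f. tbw T S R CL CR f)"
  unfolding tiles_by_def tbw_def by blast

lemma tbw_mono: "tbw T S R CL CR f \<Longrightarrow> S' \<subseteq> S \<Longrightarrow> tbw T S' R CL CR f"
  unfolding tbw_def by blast

lemma tiles_restrict: "tiles_by T S R CL CR \<Longrightarrow> F \<subseteq> S \<Longrightarrow> tiles_by T F R CL CR"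
  using tbw_mono tiles_by_tbw by metis

lemma tiles_map:
  assumes "tiles_by T S R CL CR" "\<forall>x\<in>F. \<phi> x \<in> S"
    "\<forall>x\<in>F. \<forall>y\<in>F. R' x y \<longrightarrow> R (\<phi> x) (\<phi> y)"
    "\<forall>x\<in>F. \<forall>y\<in>F. CL' x y \<longrightarrow> CL (\<phi> x) (\<phi> y)"
    "\<forall>x\<in>F. \<forall>y\<in>F. CR' x y \<longrightarrow> CR (\<phi> x) (\<phi> y)"
  shows "tiles_by T F R' CL' CR'"
proof -
  obtain f where f: "tbw T S R CL CR f" using assms(1) tiles_by_tbw by metis
  have "tbw T F R' CL' CR' (f \<circ> \<phi>)" using f assms(2-5) unfolding tbw_def by simp
  thus ?thesis using tiles_by_tbw by metis
qed

definition extd :: "'c prototile set \<Rightarrow> ('t::countable \<Rightarrow> 't \<Rightarrow> bool) \<Rightarrow> ('t \<Rightarrow> 't \<Rightarrow> bool)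
     \<Rightarrow> ('t \<Rightarrow> 't \<Rightarrow> bool) \<Rightarrow> (nat \<Rightarrow> 'c prototile) \<Rightarrow> nat \<Rightarrow> bool" where
  "extd T R CL CR p n \<longleftrightarrow> (\<forall>m. \<exists>g. tbw T (from_nat ` {..<m}) R CL CR g \<and> (\<forall>i<n. g (from_nat i) = p i))"

lemma extd_step:
  assumes T: "finite T" and e: "extd T R CL CR p n"
  shows "\<exists>t. extd T R CL CR (p(n := t)) (Suc n)"
proof (rule ccontr)
  assume "\<not> ?thesis"
  hence "\<forall>t. \<exists>m. \<not> (\<exists>g. tbw T (from_nat ` {..<m}) R CL CR g \<and> (\<forall>i<Suc n. g (from_nat i) = (p(n := t)) i))"
    unfolding extd_def by blast
  from choice[OF this] obtain mt where mt: "\<And>t. \<not> (\<exists>g. tbw T (from_nat ` {..<mt t}) R CL CR g \<and> (\<forall>i<Suc n. g (from_nat i) = (p(n := t)) i))"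
    by blast
  define M where "M = Max (mt ` T) + Suc n"
  obtain g where g: "tbw T (from_nat ` {..<M}) R CL CR g" "\<forall>i<n. g (from_nat i) = p i"
    using e unfolding extd_def by blast
  define t where "t = g (from_nat n)"
  have "from_nat n \<in> from_nat ` {..<M}" unfolding M_def by simp
  hence "t \<in> T" using g(1) unfolding tbw_def t_def by blast
  hence "mt t \<le> Max (mt ` T)" using T by simp
  hence "mt t \<le> M" unfolding M_def by linarith
  hence "from_nat ` {..<mt t} \<subseteq> from_nat ` {..<M}" by (intro image_mono) simp
  hence "tbw T (from_nat ` {..<mt t}) R CL CR g" using g(1) by (rule tbw_mono[rotated])
  moreover have "\<forall>i<Suc n. g (from_nat i) = (p(n := t)) i" using g(2) t_def by (auto simp: less_Suc_eq)
  ultimately show False using mt by blast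
qed

primrec chain :: "'c prototile set \<Rightarrow> ('t::countable \<Rightarrow> 't \<Rightarrow> bool) \<Rightarrow> ('t \<Rightarrow> 't \<Rightarrow> bool)
     \<Rightarrow> ('t \<Rightarrow> 't \<Rightarrow> bool) \<Rightarrow> nat \<Rightarrow> (nat \<Rightarrow> 'c prototile)" where
  "chain T R CL CR 0 = (\<lambda>_. undefined)"
| "chain T R CL CR (Suc n) = (chain T R CL CR n)(n := SOME t. extd T R CL CR ((chain T R CL CR n)(n := t)) (Suc n))"

lemma chain_extd:
  assumes T: "finite T" and h: "\<forall>F. finite F \<longrightarrow> tiles_by T F R CL CR"
  shows "extd T R CL CR (chain T R CL CR n) n"
proof (induction n)
  case 0
  then show ?case using h unfolding extd_def tiles_by_tbw by simp
next
  case (Suc n)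
  then show ?case using someI_ex[OF extd_step[OF T Suc]] by (simp only: chain.simps)
qed

lemma chain_stable: "i < n \<Longrightarrow> chain T R CL CR n i = chain T R CL CR (Suc i) i"
proof (induction n)
  case 0 then show ?case by simp
next
  case (Suc n)
  then show ?case by (cases "i = n") (auto simp: less_Suc_eq)
qed

lemma compactness:
  fixes R CL CR :: "'t::countable \<Rightarrow> 't \<Rightarrow> bool"
  assumes T: "finite T" and h: "\<forall>F. finite F \<longrightarrow> tiles_by T F R CL CR"
  shows "tiles_by T UNIV R CL CR"
proof -
  define f where "f x = chain T R CL CR (Suc (to_nat x)) (to_nat x)" for x :: 't
  have key: "\<exists>g. tbw T (from_nat ` {..<n}) R CL CR g \<and> g x = f x \<and> g y = f y"
    if "to_nat x < n" "to_nat y < n" for x y n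
  proof -
    obtain g where g: "tbw T (from_nat ` {..<n}) R CL CR g" "\<forall>i<n. g (from_nat i) = chain T R CL CR n i"
      using chain_extd[OF T h, of n] unfolding extd_def by blast
    have "g (from_nat (to_nat x)) = chain T R CL CR n (to_nat x)" using g(2) that by blast
    hence "g x = f x" using that chain_stable[of "to_nat x" n] unfolding f_def by simp
    have "g (from_nat (to_nat y)) = chain T R CL CR n (to_nat y)" using g(2) that by blast
    hence "g y = f y" using that chain_stable[of "to_nat y" n] unfolding f_def by simp
    show ?thesis using g \<open>g x = f x\<close> \<open>g y = f y\<close> by blast
  qed
  have mem: "x \<in> from_nat ` {..<n}" if "to_nat x < n" for x :: 't and n
    using that image_eqI[of x from_nat "to_nat x" "{..<n}"] by simp
  have "tbw T UNIV R CL CR f"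
    unfolding tbw_def
  proof (intro conjI ballI impI)
    fix x y :: 't
    obtain g where g: "tbw T (from_nat ` {..<Suc (max (to_nat x) (to_nat y))}) R CL CR g" "g x = f x" "g y = f y"
      using key[of x "Suc (max (to_nat x) (to_nat y))" y] by (meson le_imp_less_Suc max.cobounded1 max.cobounded2)
    have xm: "x \<in> from_nat ` {..<Suc (max (to_nat x) (to_nat y))}" by (rule mem) simp
    have ym: "y \<in> from_nat ` {..<Suc (max (to_nat x) (to_nat y))}" by (rule mem) simp
    have gg: "g x \<in> T" "R x y \<Longrightarrow> right_col (g x) = left_col (g y)"
      "CL x y \<Longrightarrow> botL_col (g x) = top_col (g y)" "CR x y \<Longrightarrow> botR_col (g x) = top_col (g y)"
      using g(1) xm ym unfolding tbw_def by blast+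
    show "f x \<in> T" using gg g(2) by simp
    show "R x y \<Longrightarrow> right_col (f x) = left_col (f y)" using gg g(2,3) by simp
    show "CL x y \<Longrightarrow> botL_col (f x) = top_col (f y)" using gg g(2,3) by simp
    show "CR x y \<Longrightarrow> botR_col (f x) = top_col (f y)" using gg g(2,3) by simp
  qed
  thus ?thesis using tiles_by_tbw by metis
qed


lemma two_powi_pred: "(2::real) powi (m - 1) * 2 = 2 powi m"
  by (simp add: power_int_minus_mult)

lemma hp_std: "hp_binary 1 (\<lambda>_. 0)"
  unfolding hp_binary_def
proof (intro conjI allI)
  fix k j :: int
  show "\<exists>i::int. 0 + of_int i * (1 * 2 powi (k - 1)) = (0::real) + of_int j * (1 * 2 powi k)"
  proof (rule exI[of _ "2 * j"])
    have h: "(2::real) powi k = 2 powi (k - 1) * 2" by (rule two_powi_pred[symmetric])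
    show "0 + of_int (2 * j) * (1 * 2 powi (k - 1)) = (0::real) + of_int j * (1 * 2 powi k)"
      unfolding h by simp
  qed
qed simp

lemma hp_to_sq:
  assumes "tiles_by T UNIV hp_R (hp_CL 1 (\<lambda>_. 0)) (hp_CR 1 (\<lambda>_. 0))"
  shows "tiles_by T sq_tiles sq_R sq_CL sq_CR"
proof (rule tiles_map[OF assms, where \<phi> = "\<lambda>x. (- int (fst x), int (snd x))"])
  have e: "2 * (2::real) powi (- 1 - int k) = 2 powi (- int k)" for k
  proof -
    have "- 1 - int k = - int k - 1" by simp
    thus ?thesis using two_powi_pred[of "- int k"] by (simp only: mult.commute)
  qed
  show "\<forall>x\<in>sq_tiles. \<forall>y\<in>sq_tiles. sq_CL x y \<longrightarrow> hp_CL 1 (\<lambda>_. 0) (- int (fst x), int (snd x)) (- int (fst y), int (snd y))"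
    unfolding sq_CL_def hp_CL_def using e by auto
  show "\<forall>x\<in>sq_tiles. \<forall>y\<in>sq_tiles. sq_CR x y \<longrightarrow> hp_CR 1 (\<lambda>_. 0) (- int (fst x), int (snd x)) (- int (fst y), int (snd y))"
    unfolding sq_CR_def hp_CR_def using e by auto
qed (auto simp: sq_R_def hp_R_def)

lemma grid:
  assumes hp: "hp_binary c a"
  shows "\<exists>i::int. a (K - int d) + of_int i * (c * 2 powi (K - int d)) = a K + of_int j * (c * 2 powi K)"
proof (induction d)
  case 0 then show ?case by auto
next
  case (Suc d)
  then obtain i' where i': "a (K - int d) + of_int i' * (c * 2 powi (K - int d)) = a K + of_int j * (c * 2 powi K)"
    by blast
  obtain i where "a (K - int d - 1) + of_int i * (c * 2 powi (K - int d - 1)) = a (K - int d) + of_int i' * (c * 2 powi (K - int d))"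
    using hp unfolding hp_binary_def by blast
  then show ?case using i' by (intro exI[of _ i]) (simp add: algebra_simps)
qed

lemma nat2: "0 \<le> (t::int) \<Longrightarrow> nat (2 * t) = 2 * nat t"
  by (simp add: nat_mult_distrib)

lemma nat2p1: "0 \<le> (t::int) \<Longrightarrow> nat (2 * t + 1) = 2 * nat t + 1"
  by (simp add: nat_mult_distrib nat_add_distrib)

lemma sq_to_hp_finite:
  assumes S: "tiles_by T sq_tiles sq_R sq_CL sq_CR" and hp: "hp_binary c a" and F: "finite F"
  shows "tiles_by T F hp_R (hp_CL c a) (hp_CR c a)"
proof -
  define L where "L x = a (fst x) + of_int (snd x) * (c * 2 powi (fst x))" for x :: "int \<times> int"
  have c: "c > 0" using hp unfolding hp_binary_def by simp
  define K where "K = Max (fst ` F)"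
  have K: "\<forall>x\<in>F. fst x \<le> K" using F by (simp add: K_def)
  define lo where "lo = Min (L ` F)"
  have lo: "\<forall>x\<in>F. lo \<le> L x" using F by (simp add: lo_def)
  define hi where "hi = Max (L ` F)"
  have hi: "\<forall>x\<in>F. L x \<le> hi" using F by (simp add: hi_def)
  define w where "w = c * 2 powi K"
  have w: "w > 0" using c by (simp add: w_def)
  define j0 where "j0 = floor ((lo - a K) / w)"
  define X0 where "X0 = a K + of_int j0 * w"
  have "of_int j0 \<le> (lo - a K) / w" unfolding j0_def by simp
  hence "of_int j0 * w \<le> lo - a K" using w by (simp add: pos_le_divide_eq)
  hence X0lo: "X0 \<le> lo" unfolding X0_def by simp
  obtain n :: nat where n: "(hi - X0) / w < 2 ^ n" using real_arch_pow[of 2 "(hi - X0) / w"] by auto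
  define M where "M = K + int n"
  have "(2::real) powi M = 2 powi K * 2 ^ n" unfolding M_def by (simp add: power_int_add)
  hence hiM: "hi - X0 < c * 2 powi M" using n w by (simp add: pos_divide_less_eq w_def mult_ac)
  have gridK: "\<exists>i::int. a k + of_int i * (c * 2 powi k) = X0" if "k \<le> K" for k
    using grid[OF hp, of K "nat (K - k)" j0] that unfolding X0_def w_def by simp
  define idx where "idx k = (SOME i::int. a k + of_int i * (c * 2 powi k) = X0)" for k
  have idx: "a k + of_int (idx k) * (c * 2 powi k) = X0" if "k \<le> K" for k
    unfolding idx_def using someI_ex[OF gridK[OF that]] .
  have diff: "a k + of_int j * (c * 2 powi k) - X0 = of_int (j - idx k) * (c * 2 powi k)" if "k \<le> K" for k j
    using idx[OF that] by (simp add: algebra_simps)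
  have child: "u - idx (k - 1) = 2 * (v - idx k)"
    if "k \<le> K" "a (k - 1) + of_int u * (c * 2 powi (k - 1)) = a k + of_int v * (c * 2 powi k)" for k u v
  proof -
    have kk: "k - 1 \<le> K" using that(1) by simp
    have "of_int (u - idx (k - 1)) * (c * 2 powi (k - 1)) = a (k - 1) + of_int u * (c * 2 powi (k - 1)) - X0"
      by (rule diff[OF kk, symmetric])
    also have "\<dots> = a k + of_int v * (c * 2 powi k) - X0" using that(2) by simp
    also have "\<dots> = of_int (v - idx k) * (c * 2 powi k)" by (rule diff[OF that(1)])
    also have "\<dots> = of_int (2 * (v - idx k)) * (c * 2 powi (k - 1))"
      unfolding two_powi_pred[of k, symmetric] by simp
    finally have "real_of_int (u - idx (k - 1)) = of_int (2 * (v - idx k))" using c by simp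
    thus ?thesis by linarith
  qed
  define \<phi> where "\<phi> x = (nat (M - fst x), nat (snd x - idx (fst x)))" for x :: "int \<times> int"
  have dpos: "snd x - idx (fst x) \<ge> 0" and dlt: "nat (snd x - idx (fst x)) < 2 ^ nat (M - fst x)"
    and Mk: "fst x \<le> M" if "x \<in> F" for x
  proof -
    obtain k j where x: "x = (k, j)" by fastforce
    have kK: "k \<le> K" using K that x by auto
    have e: "of_int (j - idx k) * (c * 2 powi k) = L x - X0" using diff[OF kK, of j] x L_def by simp
    have p: "c * 2 powi k > 0" using c by simp
    have "lo \<le> L x" using lo that by blast
    hence "L x - X0 \<ge> 0" using X0lo by linarith
    hence "of_int (j - idx k) * (c * 2 powi k) \<ge> 0" using e by simp
    hence d0: "j - idx k \<ge> 0" using p by (simp add: zero_le_mult_iff)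
    thus "snd x - idx (fst x) \<ge> 0" using x by simp
    show "fst x \<le> M" using kK x M_def by simp
    have "(2::real) powi M = 2 powi k * 2 powi (M - k)" by (simp flip: power_int_add)
    also have "\<dots> = 2 powi k * 2 ^ nat (M - k)" using kK M_def by (simp add: power_int_nonneg_exp)
    finally have pM: "(2::real) powi M = 2 powi k * 2 ^ nat (M - k)" .
    have "L x \<le> hi" using hi that by blast
    hence "of_int (j - idx k) * (c * 2 powi k) < c * 2 powi M" using e hiM by linarith
    also have "\<dots> = 2 ^ nat (M - k) * (c * 2 powi k)" using pM by simp
    finally have "real_of_int (j - idx k) < 2 ^ nat (M - k)" using p mult_less_cancel_right_pos by blast
    hence "real_of_int (j - idx k) < real_of_int (2 ^ nat (M - k))" by simp
    hence "j - idx k < 2 ^ nat (M - k)" by linarith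
    hence "nat (j - idx k) < 2 ^ nat (M - k)" using d0 by (metis nat_less_iff of_nat_numeral of_nat_power)
    thus "nat (snd x - idx (fst x)) < 2 ^ nat (M - fst x)" using x by simp
  qed
  show ?thesis
  proof (rule tiles_map[OF S, where \<phi> = \<phi>])
    show "\<forall>x\<in>F. \<phi> x \<in> sq_tiles" using dlt unfolding \<phi>_def sq_tiles_def by auto
    show "\<forall>x\<in>F. \<forall>y\<in>F. hp_R x y \<longrightarrow> sq_R (\<phi> x) (\<phi> y)"
    proof (intro ballI impI)
      fix x y assume xy: "x \<in> F" "y \<in> F" "hp_R x y"
      have "fst y = fst x" "snd y = snd x + 1" using xy(3) unfolding hp_R_def by auto
      thus "sq_R (\<phi> x) (\<phi> y)" unfolding sq_R_def \<phi>_def using dpos[OF xy(1)] by simp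
    qed
    show "\<forall>x\<in>F. \<forall>y\<in>F. hp_CL c a x y \<longrightarrow> sq_CL (\<phi> x) (\<phi> y)"
    proof (intro ballI impI)
      fix x y assume xy: "x \<in> F" "y \<in> F" "hp_CL c a x y"
      have ch: "snd y - idx (fst x - 1) = 2 * (snd x - idx (fst x))"
        using child[of "fst x" "snd y" "snd x"] xy K unfolding hp_CL_def by auto
      have fy: "fst y = fst x - 1" using xy unfolding hp_CL_def by simp
      have d: "snd x - idx (fst x) \<ge> 0" "fst x \<le> M" using dpos[OF xy(1)] Mk[OF xy(1)] by auto
      have e1: "nat (M - fst y) = nat (M - fst x) + 1" using fy d by arith
      have "snd y - idx (fst y) = 2 * (snd x - idx (fst x))" using fy ch by simp
      hence e2: "nat (snd y - idx (fst y)) = 2 * nat (snd x - idx (fst x))" using d nat2 by simp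
      show "sq_CL (\<phi> x) (\<phi> y)" unfolding sq_CL_def \<phi>_def using e1 e2 by simp
    qed
    show "\<forall>x\<in>F. \<forall>y\<in>F. hp_CR c a x y \<longrightarrow> sq_CR (\<phi> x) (\<phi> y)"
    proof (intro ballI impI)
      fix x y assume xy: "x \<in> F" "y \<in> F" "hp_CR c a x y"
      have ch: "snd y - 1 - idx (fst x - 1) = 2 * (snd x - idx (fst x))"
        using child[of "fst x" "snd y - 1" "snd x"] xy K unfolding hp_CR_def by auto
      have fy: "fst y = fst x - 1" using xy unfolding hp_CR_def by simp
      have d: "snd x - idx (fst x) \<ge> 0" "fst x \<le> M" using dpos[OF xy(1)] Mk[OF xy(1)] by auto
      have e1: "nat (M - fst y) = nat (M - fst x) + 1" using fy d by arith
      have "snd y - idx (fst y) = 2 * (snd x - idx (fst x)) + 1" using fy ch by simp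
      hence e2: "nat (snd y - idx (fst y)) = 2 * nat (snd x - idx (fst x)) + 1" using d nat2p1 by simp
      show "sq_CR (\<phi> x) (\<phi> y)" unfolding sq_CR_def \<phi>_def using e1 e2 by simp
    qed
  qed
qed

theorem lemma29:
  fixes T :: "'c prototile set"
  assumes "finite T"
  shows "(tiles_by T sq_tiles sq_R sq_CL sq_CR
           \<longleftrightarrow> (\<forall>c a. hp_binary c a \<longrightarrow> tiles_by T UNIV hp_R (hp_CL c a) (hp_CR c a)))
       \<and> ((\<forall>c a. hp_binary c a \<longrightarrow> tiles_by T UNIV hp_R (hp_CL c a) (hp_CR c a))
           \<longleftrightarrow> ((\<forall>F. finite F \<and> F \<subseteq> sq_tiles \<longrightarrow> tiles_by T F sq_R sq_CL sq_CR)
               \<and> (\<forall>c a F. hp_binary c a \<and> finite F \<longrightarrow> tiles_by T F hp_R (hp_CL c a) (hp_CR c a))))"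
proof -
  let ?S = "tiles_by T sq_tiles sq_R sq_CL sq_CR"
  let ?H = "\<forall>c a. hp_binary c a \<longrightarrow> tiles_by T UNIV hp_R (hp_CL c a) (hp_CR c a)"
  let ?FS = "\<forall>F. finite F \<and> F \<subseteq> sq_tiles \<longrightarrow> tiles_by T F sq_R sq_CL sq_CR"
  let ?FH = "\<forall>c a F. hp_binary c a \<and> finite F \<longrightarrow> tiles_by T F hp_R (hp_CL c a) (hp_CR c a)"
  have HS: "?H \<Longrightarrow> ?S"
  proof -
    assume H: ?H
    have "tiles_by T UNIV hp_R (hp_CL 1 (\<lambda>_. 0)) (hp_CR 1 (\<lambda>_. 0))" using H hp_std by blast
    thus ?S by (rule hp_to_sq)
  qed
  have SFH: "?S \<Longrightarrow> ?FH"
  proof (intro allI impI)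
    fix c a F assume S: ?S and h: "hp_binary c a \<and> finite (F :: (int \<times> int) set)"
    show "tiles_by T F hp_R (hp_CL c a) (hp_CR c a)" using sq_to_hp_finite[OF S] h by blast
  qed
  have FHH: "?FH \<Longrightarrow> ?H"
  proof (intro allI impI)
    fix c a assume FH: ?FH and h: "hp_binary c a"
    show "tiles_by T UNIV hp_R (hp_CL c a) (hp_CR c a)"
    proof (rule compactness[OF assms])
      show "\<forall>F. finite F \<longrightarrow> tiles_by T F hp_R (hp_CL c a) (hp_CR c a)" using FH h by blast
    qed
  qed
  have SFS: "?S \<Longrightarrow> ?FS"
  proof (intro allI impI)
    fix F assume S: ?S and h: "finite F \<and> F \<subseteq> sq_tiles"
    show "tiles_by T F sq_R sq_CL sq_CR" using tiles_restrict[OF S] h by blast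
  qed
  show ?thesis
  proof (rule conjI; rule iffI)
    assume S: ?S
    show ?H by (rule FHH[OF SFH[OF S]])
  next
    assume H: ?H
    show ?S by (rule HS[OF H])
  next
    assume H: ?H
    show "?FS \<and> ?FH" by (rule conjI[OF SFS[OF HS[OF H]] SFH[OF HS[OF H]]])
  next
    assume h: "?FS \<and> ?FH"
    show ?H by (rule FHH[OF conjunct2[OF h]])
  qed
qed

end
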